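(* Let $z\in\mathbb{C}$ and let $s,a$ be parameters for which $\Phi(z,s,a)$ and $\Gamma(s)$ are defined. If the integral converges, then \[ \Phi(z,s,a)\,\Gamma(s)=\int_0^1\!\!\int_0^1\frac{-s\,(xy)^{a-1}\left(-\log(y)\right)^{s-1}}{(1-zxy)\log(xy)}\,dx\,dy, \] and \[ \zeta(s)\,\Gamma(s)=\int_0^1\!\!\int_0^1\frac{-s\left(-\log(y)\right)^{s-1}}{(1-xy)\log(xy)}\,dx\,dy. \]
   Context: The Lerch transcendent is $\Phi(z,s,a)=\sum_{k=0}^\infty \frac{z^k}{(k+a)^s}$ (where this series converges); $\Gamma$ is Euler's gamma function and $\zeta$ the Riemann zeta function. *)

theory Defs
  imports "HOL-Analysis.Analysis"
begin

definition lerch_phi :: "complex \<Rightarrow> complex \<Rightarrow> complex \<Rightarrow> complex" where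
  "lerch_phi z s a = (\<Sum>k. z ^ k / (of_nat k + a) powr s)"

text \<open>Riemann zeta function via its Dirichlet series (agrees with zeta for Re s > 1,
  which is exactly where the series converges).\<close>
definition riemann_zeta :: "complex \<Rightarrow> complex" where
  "riemann_zeta s = (\<Sum>k. 1 / (of_nat (Suc k)) powr s)"

end

theory Submission
  imports Defs "HOL-Complex_Analysis.Complex_Analysis" "HOL-Real_Asymp.Real_Asymp"
begin


lemma norm_powr_bound:
  fixes w s :: complex
  assumes "norm w \<ge> 1"
  shows "norm (w powr s) \<le> exp (norm s * pi) * norm w powr norm s"
proof -
  have w0: "w \<noteq> 0" using assms by auto
  have e1: "norm (w powr s) = exp (Re (s * Ln w))" using w0 by (simp add: powr_def norm_exp_eq_Re)
  have r1: "Re (s * Ln w) \<le> norm s * norm (Ln w)"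
    by (metis complex_Re_le_cmod norm_mult)
  have "norm (Ln w) \<le> \<bar>Re (Ln w)\<bar> + \<bar>Im (Ln w)\<bar>" by (rule cmod_le)
  also have "\<bar>Re (Ln w)\<bar> = ln (norm w)" using w0 assms by (simp add: Re_Ln)
  also have "\<bar>Im (Ln w)\<bar> \<le> pi" using w0 mpi_less_Im_Ln[of w] Im_Ln_le_pi[of w] by auto
  finally have r2: "norm (Ln w) \<le> ln (norm w) + pi" by simp
  have "Re (s * Ln w) \<le> norm s * (ln (norm w) + pi)"
    using r1 mult_left_mono[OF r2, of "norm s"] by simp
  hence "norm (w powr s) \<le> exp (norm s * (ln (norm w) + pi))" using e1 by simp
  also have "\<dots> = exp (norm s * pi) * norm w powr norm s"
    using w0 by (simp add: powr_def distrib_left exp_add mult.commute)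
  finally show ?thesis .
qed

lemma summable_lerch_norm_le1:
  fixes z s a :: complex
  assumes "summable (\<lambda>k. z ^ k / (of_nat k + a) powr s)"
  shows "norm z \<le> 1"
proof (rule ccontr)
  assume "\<not> norm z \<le> 1"
  hence z1: "norm z > 1" by simp
  define q where "q = ln (norm z)"
  have q: "q > 0" using z1 by (simp add: q_def ln_gt_zero)
  define A where "A = norm a + 1"
  have A: "A \<ge> 1" by (simp add: A_def)
  define C where "C = exp (norm s * pi)"
  have C: "C > 0" by (simp add: C_def)
  have lim: "filterlim (\<lambda>k::nat. exp (q * real k) / (real k + A) powr norm s) at_top at_top"
    using q A by real_asymp
  have "filterlim (\<lambda>k::nat. (exp (q * real k) / (real k + A) powr norm s) / C) at_top at_top"
    using q A C by real_asymp
  hence ev1: "eventually (\<lambda>k::nat. (exp (q * real k) / (real k + A) powr norm s) / C \<ge> 1) at_top"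
    by (simp add: filterlim_at_top)
  have t0: "(\<lambda>k. z ^ k / (of_nat k + a) powr s) \<longlonglongrightarrow> 0"
    by (rule summable_LIMSEQ_zero[OF assms])
  have "eventually (\<lambda>k. norm (z ^ k / (of_nat k + a) powr s) < 1) at_top"
    using order_tendstoD(2)[OF tendsto_norm_zero[OF t0], of 1] by simp
  moreover have "eventually (\<lambda>k::nat. real k \<ge> norm a + 1) at_top"
    by real_asymp
  ultimately have "eventually (\<lambda>k::nat. False) at_top" using ev1
  proof eventually_elim
    case (elim k)
    have nk: "norm (of_nat k + a) \<ge> 1"
      using elim(2) norm_triangle_ineq2[of "of_nat k" "-a"] by (auto simp: norm_minus_commute)
    have nk2: "norm (of_nat k + a) \<le> real k + A"
      using norm_triangle_ineq[of "of_nat k" a] by (simp add: A_def)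
    have "norm ((of_nat k + a) powr s) \<le> C * norm (of_nat k + a) powr norm s"
      using norm_powr_bound[OF nk] by (simp add: C_def)
    also have "\<dots> \<le> C * (real k + A) powr norm s"
      using nk nk2 C by (intro mult_left_mono powr_mono2) auto
    finally have b1: "norm ((of_nat k + a) powr s) \<le> C * (real k + A) powr norm s" .
    have pos: "norm ((of_nat k + a) powr s) > 0" using nk by auto
    have "norm (z ^ k) = exp (q * real k)"
    proof -
      have "exp (q * real k) = exp (real k * q)" by (simp add: mult.commute)
      also have "\<dots> = exp q ^ k" by (rule exp_of_nat_mult)
      also have "exp q = norm z" using z1 by (auto simp: q_def)
      finally show ?thesis by (simp add: norm_power)
    qed
    hence "norm (z ^ k / (of_nat k + a) powr s) = exp (q * real k) / norm ((of_nat k + a) powr s)"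
      by (simp add: norm_divide)
    also have "\<dots> \<ge> exp (q * real k) / (C * (real k + A) powr norm s)"
    proof (rule divide_left_mono)
      have "(real k + A) powr norm s > 0" using A by simp
      thus "0 < C * (real k + A) powr norm s * norm ((of_nat k + a) powr s)"
        using C pos by simp
    qed (use b1 in auto)
    finally have "norm (z ^ k / (of_nat k + a) powr s) \<ge> (exp (q * real k) / (real k + A) powr norm s) / C"
      by (simp add: field_simps)
    thus False using elim by linarith
  qed
  thus False by simp
qed



lemma bridge:
  fixes f :: "real \<Rightarrow> 'b::euclidean_space"
  assumes S: "S \<in> sets borel" and f: "f \<in> borel_measurable borel"
  shows "set_integrable lborel S f \<longleftrightarrow> f absolutely_integrable_on S"
    and "set_integrable lborel S f \<Longrightarrow> (LINT x:S|lborel. f x) = integral S f"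
proof -
  have m: "(\<lambda>x. indicator S x *\<^sub>R f x) \<in> borel_measurable lborel"
    using S f by measurable
  show *: "set_integrable lborel S f \<longleftrightarrow> f absolutely_integrable_on S"
    unfolding set_integrable_def using integrable_completion[OF m] by simp
  assume i: "set_integrable lborel S f"
  have "(LINT x:S|lborel. f x) = (LINT x:S|lebesgue. f x)"
    unfolding set_lebesgue_integral_def using integral_completion[OF m] by simp
  also have "\<dots> = integral S f"
    using i * by (intro set_lebesgue_integral_eq_integral) auto
  finally show "(LINT x:S|lborel. f x) = integral S f" .
qed

definition gi :: "complex \<Rightarrow> complex \<Rightarrow> real \<Rightarrow> complex" where
  "gi s b t = of_real t powr (s - 1) * exp (- b * of_real t)"

lemma gi_measurable [measurable]: "gi s b \<in> borel_measurable borel"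
  unfolding gi_def by measurable

lemma gamma_base:
  assumes "Re s > 0"
  shows "set_integrable lborel {0<..} (gi s 1)" "(LINT t:{0<..}|lborel. gi s 1 t) = Gamma s"
proof -
  have eq: "gi s 1 t = of_real t powr (s - 1) / of_real (exp t)" for t
    by (simp add: gi_def exp_of_real[symmetric] exp_minus field_simps)
  have ai: "gi s 1 absolutely_integrable_on {0<..}"
    unfolding eq using absolutely_integrable_Gamma_integral'[OF assms] by simp
  thus "set_integrable lborel {0<..} (gi s 1)" using bridge(1)[of "{0<..}" "gi s 1"] by simp
  hence "(LINT t:{0<..}|lborel. gi s 1 t) = integral {0<..} (gi s 1)"
    using bridge(2)[of "{0<..}" "gi s 1"] by simp
  also have "\<dots> = Gamma s" unfolding eq using Gamma_integral_complex'[OF assms] by (simp add: integral_unique)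
  finally show "(LINT t:{0<..}|lborel. gi s 1 t) = Gamma s" .
qed

lemma exp_partial_bound:
  fixes x :: complex
  shows "norm (\<Sum>n<N. x ^ n / of_nat (fact n)) \<le> exp (norm x)"
proof -
  have "norm (\<Sum>n<N. x ^ n / of_nat (fact n)) \<le> (\<Sum>n<N. norm x ^ n / fact n)"
    by (rule order_trans[OF norm_sum]) (simp add: norm_divide norm_power)
  also have "\<dots> \<le> (\<Sum>n. norm x ^ n / fact n)"
    using exp_converges[of "norm x"]
    by (intro sum_le_suminf) (auto simp: sums_iff divide_inverse mult.commute)
  also have "\<dots> = exp (norm x)"
    using exp_converges[of "norm x"] by (simp add: sums_iff divide_inverse mult.commute)
  finally show ?thesis .
qed

lemma gamma_disk:
  assumes s: "Re s > 0" and w: "norm w < 1"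
  shows "set_integrable lborel {0<..} (gi s (1 + w))"
    and "(LINT t:{0<..}|lborel. gi s (1 + w) t) = Gamma s * (1 + w) powr (- s)"
proof -
  define S where "S = (\<lambda>N t. indicator {0<..} t *\<^sub>R (gi s 1 t * (\<Sum>n<N. (- w * of_real t) ^ n / of_nat (fact n))))"
  define f where "f = (\<lambda>t. indicator {0<..} t *\<^sub>R gi s (1 + w) t)"
  define W where "W = (\<lambda>t. indicator {0<..} t *\<^sub>R norm (of_real t powr (s - 1) / of_real (exp ((1 - norm w) * t))))"
  have Wi: "integrable lborel W"
  proof -
    have "(\<lambda>t. of_real t powr (s - 1) / of_real (exp ((1 - norm w) * t))) absolutely_integrable_on {0<..}"
      using absolutely_integrable_Gamma_integral[OF s, of "1 - norm w"] w by simp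
    hence "set_integrable lborel {0<..} (\<lambda>t. of_real t powr (s - 1) / of_real (exp ((1 - norm w) * t)))"
      by (subst bridge(1)) auto
    hence "set_integrable lborel {0<..} (\<lambda>t. norm (of_real t powr (s - 1) / of_real (exp ((1 - norm w) * t))))"
      by (rule set_integrable_norm)
    thus ?thesis by (simp add: W_def set_integrable_def)
  qed
  have lim: "AE t in lborel. (\<lambda>N. S N t) \<longlonglongrightarrow> f t"
  proof (rule AE_I2)
    fix t :: real
    have "(\<lambda>N. \<Sum>n<N. (- w * of_real t) ^ n / of_nat (fact n)) \<longlonglongrightarrow> exp (- w * of_real t)"
      using exp_converges[of "- w * of_real t"]
      by (simp add: sums_def divide_inverse scaleR_conv_of_real mult.commute)
    hence "(\<lambda>N. indicator {0<..} t *\<^sub>R (gi s 1 t * (\<Sum>n<N. (- w * of_real t) ^ n / of_nat (fact n))))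
           \<longlonglongrightarrow> indicator {0<..} t *\<^sub>R (gi s 1 t * exp (- w * of_real t))"
      by (intro tendsto_intros)
    moreover have "gi s 1 t * exp (- w * of_real t) = gi s (1 + w) t"
      by (simp add: gi_def exp_add[symmetric] algebra_simps)
    ultimately show "(\<lambda>N. S N t) \<longlonglongrightarrow> f t" by (simp add: S_def f_def)
  qed
  have bound: "AE t in lborel. norm (S N t) \<le> W t" for N
  proof (rule AE_I2)
    fix t :: real
    show "norm (S N t) \<le> W t"
    proof (cases "t > 0")
      case True
      have "norm (S N t) = norm (gi s 1 t) * norm (\<Sum>n<N. (- w * of_real t) ^ n / of_nat (fact n))"
        using True by (simp add: S_def norm_mult)
      also have "\<dots> \<le> norm (gi s 1 t) * exp (norm w * t)"
        using exp_partial_bound[where N=N and x="- w * of_real t"] True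
        by (intro mult_left_mono) (auto simp: norm_mult)
      also have "\<dots> = W t"
        using True by (simp add: W_def gi_def norm_mult norm_divide norm_powr_real_powr
             norm_exp_eq_Re exp_diff field_simps exp_add[symmetric])
      finally show ?thesis .
    qed (simp add: S_def W_def)
  qed
  have Sm: "S N \<in> borel_measurable lborel" for N unfolding S_def by measurable
  have fm: "f \<in> borel_measurable lborel" unfolding f_def by measurable
  have fi: "integrable lborel f"
    by (rule integrable_dominated_convergence[OF fm Sm Wi lim bound])
  thus "set_integrable lborel {0<..} (gi s (1 + w))" by (simp add: f_def set_integrable_def)
  have conv: "(\<lambda>N. integral\<^sup>L lborel (S N)) \<longlonglongrightarrow> integral\<^sup>L lborel f"
    by (rule integral_dominated_convergence[OF fm Sm Wi lim bound])
  have Sval: "integral\<^sup>L lborel (S N) = (\<Sum>n<N. (- w) ^ n / of_nat (fact n) * Gamma (s + of_nat n))" for N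
  proof -
    have Seq: "S N = (\<lambda>t. \<Sum>n<N. (- w) ^ n / of_nat (fact n) * (indicator {0<..} t *\<^sub>R gi (s + of_nat n) 1 t))"
    proof
      fix t :: real
      show "S N t = (\<Sum>n<N. (- w) ^ n / of_nat (fact n) * (indicator {0<..} t *\<^sub>R gi (s + of_nat n) 1 t))"
      proof (cases "t > 0")
        case True
        have "gi s 1 t * (- w * of_real t) ^ n / of_nat (fact n) = (- w) ^ n / of_nat (fact n) * gi (s + of_nat n) 1 t" for n
        proof -
          have "of_real t powr (s + of_nat n - 1) = of_real t powr (s - 1) * of_real t powr (of_nat n)"
            by (simp add: powr_add[symmetric] algebra_simps)
          also have "of_real t powr (of_nat n :: complex) = of_real t ^ n"
            using True by (simp add: powr_nat')
          moreover have "(- w * of_real t) ^ n = (- w) ^ n * (of_real t) ^ n" by (rule power_mult_distrib)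
          ultimately show ?thesis by (simp add: gi_def field_simps)
        qed
        thus ?thesis using True by (simp add: S_def sum_distrib_left sum_divide_distrib)
      qed (simp add: S_def)
    qed
    have "integral\<^sup>L lborel (S N) = integral\<^sup>L lborel (\<lambda>t. \<Sum>n<N. (- w) ^ n / of_nat (fact n) * (indicator {0<..} t *\<^sub>R gi (s + of_nat n) 1 t))"
      by (simp only: Seq)
    also have "\<dots> = (\<Sum>n<N. integral\<^sup>L lborel (\<lambda>t. (- w) ^ n / of_nat (fact n) * (indicator {0<..} t *\<^sub>R gi (s + of_nat n) 1 t)))"
    proof (rule Bochner_Integration.integral_sum[where I="{..<N}" and M=lborel and f="\<lambda>n t. (- w) ^ n / of_nat (fact n) * (indicator {0<..} t *\<^sub>R gi (s + of_nat n) 1 t)"])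
      fix n show "integrable lborel (\<lambda>t. (- w) ^ n / of_nat (fact n) * (indicator {0<..} t *\<^sub>R gi (s + of_nat n) 1 t))"
        using gamma_base(1)[of "s + of_nat n"] s by (intro integrable_mult_right) (auto simp: set_integrable_def)
    qed
    also have "\<dots> = (\<Sum>n<N. (- w) ^ n / of_nat (fact n) * integral\<^sup>L lborel (\<lambda>t. indicator {0<..} t *\<^sub>R gi (s + of_nat n) 1 t))"
      by (intro sum.cong refl integral_mult_right_zero)
    also have "\<dots> = (\<Sum>n<N. (- w) ^ n / of_nat (fact n) * Gamma (s + of_nat n))"
      using gamma_base(2) s by (intro sum.cong refl) (auto simp: set_lebesgue_integral_def)
    finally show ?thesis .
  qed
  have "(\<lambda>n. (- w) ^ n / of_nat (fact n) * Gamma (s + of_nat n)) sums (Gamma s * (1 + w) powr (- s))"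
  proof -
    have sG: "s \<notin> \<int>\<^sub>\<le>\<^sub>0" using s by (auto elim!: nonpos_Ints_cases)
    have "(\<lambda>n. Gamma s * ((-1)^n * ((s + of_nat n - 1) gchoose n) * w^n)) sums (Gamma s * (1 + w) powr (- s))"
      using one_plus_neg_powr_powser[OF w, of s] by (intro sums_mult)
    moreover have "Gamma s * ((-1)^n * ((s + of_nat n - 1) gchoose n) * w^n) = (- w) ^ n / of_nat (fact n) * Gamma (s + of_nat n)" for n
    proof -
      have "(s + of_nat n - 1) gchoose n = pochhammer s n / fact n"
        by (simp add: gbinomial_pochhammer')
      moreover have "pochhammer s n = Gamma (s + of_nat n) / Gamma s" using pochhammer_Gamma[OF sG] .
      moreover have "Gamma s \<noteq> 0" using sG by (simp add: Gamma_eq_zero_iff)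
      ultimately show ?thesis by (simp add: power_minus' field_simps power_mult_distrib)
    qed
    ultimately show ?thesis by simp
  qed
  hence "(\<lambda>N. integral\<^sup>L lborel (S N)) \<longlonglongrightarrow> Gamma s * (1 + w) powr (- s)"
    unfolding Sval sums_def .
  with conv have "integral\<^sup>L lborel f = Gamma s * (1 + w) powr (- s)" using LIMSEQ_unique by blast
  thus "(LINT t:{0<..}|lborel. gi s (1 + w) t) = Gamma s * (1 + w) powr (- s)"
    by (simp add: f_def set_lebesgue_integral_def)
qed




lemma cov_lborel:
  fixes f :: "real \<Rightarrow> complex" and g h :: "real \<Rightarrow> real"
  assumes S: "S \<in> sets borel" and gS: "g ` S \<in> sets borel"
    and fm: "f \<in> borel_measurable borel"
    and fgm: "(\<lambda>x. \<bar>h x\<bar> *\<^sub>R f (g x)) \<in> borel_measurable borel"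
    and der: "\<And>x. x \<in> S \<Longrightarrow> (g has_field_derivative h x) (at x within S)"
    and inj: "inj_on g S"
  shows "set_integrable lborel S (\<lambda>x. \<bar>h x\<bar> *\<^sub>R f (g x)) \<longleftrightarrow> set_integrable lborel (g ` S) f"
    and "set_integrable lborel (g ` S) f \<Longrightarrow>
         (LINT x:g ` S|lborel. f x) = (LINT x:S|lborel. \<bar>h x\<bar> *\<^sub>R f (g x))"
proof -
  have Sl: "S \<in> sets lebesgue" using S by simp
  note cv = has_absolute_integral_change_of_variables_real[OF Sl der inj]
  show "set_integrable lborel S (\<lambda>x. \<bar>h x\<bar> *\<^sub>R f (g x)) \<longleftrightarrow> set_integrable lborel (g ` S) f"
    using cv[of f "integral (g ` S) f"] cv[of f "integral S (\<lambda>x. \<bar>h x\<bar> *\<^sub>R f (g x))"]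
    by (simp add: bridge(1)[OF S fgm] bridge(1)[OF gS fm]) blast
  assume i: "set_integrable lborel (g ` S) f"
  have i2: "set_integrable lborel S (\<lambda>x. \<bar>h x\<bar> *\<^sub>R f (g x))"
    using cv[of f "integral (g ` S) f"] i by (simp add: bridge(1)[OF S fgm] bridge(1)[OF gS fm])
  have "integral S (\<lambda>x. \<bar>h x\<bar> *\<^sub>R f (g x)) = integral (g ` S) f"
    using cv[of f "integral (g ` S) f"] i by (simp add: bridge(1)[OF S fgm] bridge(1)[OF gS fm])
  thus "(LINT x:g ` S|lborel. f x) = (LINT x:S|lborel. \<bar>h x\<bar> *\<^sub>R f (g x))"
    using bridge(2)[OF S fgm i2] bridge(2)[OF gS fm i] by simp
qed

lemma gamma_scale:
  assumes s: "Re s > 0" and b: "Re b > 0"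
  shows "set_integrable lborel {0<..} (gi s b)"
    and "(LINT t:{0<..}|lborel. gi s b t) = Gamma s * b powr (- s)"
proof -
  define \<mu> where "\<mu> = Re b / (norm b)^2"
  have b0: "b \<noteq> 0" using b by auto
  have \<mu>: "\<mu> > 0" using b b0 by (simp add: \<mu>_def)
  define c where "c = of_real \<mu> * b"
  define w where "w = c - 1"
  have w: "norm w < 1"
  proof -
    have nb: "(norm b)^2 = Re b ^ 2 + Im b ^ 2" by (simp add: cmod_power2)
    have "Re w = Re b ^ 2 / (norm b)^2 - 1" "Im w = Re b * Im b / (norm b)^2"
      by (simp_all add: w_def c_def \<mu>_def power2_eq_square)
    hence "(norm w)^2 = (Re b ^ 2 / (norm b)^2 - 1)^2 + (Re b * Im b / (norm b)^2)^2"
      by (simp add: cmod_power2)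
    also have "\<dots> = Im b ^ 2 / (norm b)^2"
    proof -
      define x y where "x = Re b" and "y = Im b"
      define N where "N = x^2 + y^2"
      have N: "N > 0" using b by (simp add: N_def x_def add_pos_nonneg)
      have e1: "x^2 / N - 1 = - (y^2 / N)" using N by (simp add: divide_simps) (simp add: N_def)
      have "(x^2 / N - 1)^2 + (x * y / N)^2 = (y^2 * (y^2 + x^2)) / N^2"
        unfolding e1 by (simp add: power2_eq_square add_divide_distrib algebra_simps)
      also have "y^2 * (y^2 + x^2) = y^2 * N" by (simp add: N_def algebra_simps)
      also have "y^2 * N / N^2 = y^2 / N" using N by (simp add: power2_eq_square)
      finally show ?thesis unfolding nb by (simp add: x_def y_def N_def)
    qed
    also have "\<dots> < 1" using b b0 unfolding nb
      by (subst divide_less_eq_1_pos) (auto intro: add_pos_nonneg)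
    finally have "(norm w)^2 < 1" .
    thus ?thesis by (simp add: power_less_one_iff abs_square_less_1)
  qed
  have c1: "c = 1 + w" by (simp add: w_def)
  note D = gamma_disk[OF s w, folded c1]
  have img: "(\<lambda>x. \<mu> * x) ` {0<..} = {0<..}"
  proof
    show "{0<..} \<subseteq> (\<lambda>x. \<mu> * x) ` {0<..}"
    proof
      fix y :: real assume "y \<in> {0<..}"
      thus "y \<in> (\<lambda>x. \<mu> * x) ` {0<..}" using \<mu> by (intro image_eqI[of _ _ "y / \<mu>"]) auto
    qed
  qed (use \<mu> in auto)
  have d: "\<And>x. x \<in> {0<..} \<Longrightarrow> ((\<lambda>x. \<mu> * x) has_field_derivative \<mu>) (at x within {0<..})"
    by (auto intro!: derivative_eq_intros)
  have injm: "inj_on (\<lambda>x. \<mu> * x) {0<..}" using \<mu> by (auto intro!: inj_onI)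
  have fgm: "(\<lambda>x. \<bar>\<mu>\<bar> *\<^sub>R gi s b (\<mu> * x)) \<in> borel_measurable borel" by measurable
  have gS: "(\<lambda>x. \<mu> * x) ` {0<..} \<in> sets borel" unfolding img by simp
  note cov = cov_lborel[of "{0<..}", OF _ gS gi_measurable fgm d injm, simplified]
  have pt: "\<bar>\<mu>\<bar> *\<^sub>R gi s b (\<mu> * x) = of_real \<mu> powr s * gi s c x" if "x \<in> {0<..}" for x
  proof -
    have x: "x > 0" using that by simp
    have "of_real (\<mu> * x) powr (s - 1) = of_real \<mu> powr (s - 1) * of_real x powr (s - 1)"
      using x \<mu> by (simp add: powr_times_real)
    moreover have "of_real \<mu> * of_real \<mu> powr (s - 1) = (of_real \<mu> powr s :: complex)"
      using powr_add[of "of_real \<mu> :: complex" "s - 1" 1] \<mu> by simp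
    ultimately show ?thesis using \<mu>
      by (simp add: gi_def c_def scaleR_conv_of_real algebra_simps)
  qed
  have i1: "set_integrable lborel {0<..} (\<lambda>x. \<bar>\<mu>\<bar> *\<^sub>R gi s b (\<mu> * x))"
  proof -
    have "set_integrable lborel {0<..} (\<lambda>x. of_real \<mu> powr s * gi s c x)"
      using D(1) by (rule set_integrable_mult_right)
    thus ?thesis by (rule set_integrable_cong[THEN iffD1, rotated -1]) (use pt in auto)
  qed
  hence i2: "set_integrable lborel {0<..} (gi s b)" using cov(1) img by simp
  thus "set_integrable lborel {0<..} (gi s b)" .
  have "(LINT t:{0<..}|lborel. gi s b t) = (LINT x:{0<..}|lborel. \<bar>\<mu>\<bar> *\<^sub>R gi s b (\<mu> * x))"
    using cov(2) img i2 by simp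
  also have "\<dots> = (LINT x:{0<..}|lborel. of_real \<mu> powr s * gi s c x)"
    by (rule set_lebesgue_integral_cong) (use pt in auto)
  also have "\<dots> = of_real \<mu> powr s * (Gamma s * c powr (- s))"
    using D(2) by simp
  also have "c powr (- s) = of_real \<mu> powr (- s) * b powr (- s)"
    unfolding c_def using \<mu> by (intro powr_times_real_left) auto
  also have "of_real \<mu> powr s * (Gamma s * (of_real \<mu> powr (- s) * b powr (- s))) =
             (of_real \<mu> powr s * of_real \<mu> powr (- s)) * Gamma s * b powr (- s)" by (simp add: algebra_simps)
  also have "of_real \<mu> powr s * of_real \<mu> powr (- s) = (1 :: complex)"
    using \<mu> by (simp add: powr_minus)
  finally show "(LINT t:{0<..}|lborel. gi s b t) = Gamma s * b powr (- s)" by simp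
qed




lemma pow_int:
  assumes s: "Re s > 0" and c: "c > 0"
  shows "set_integrable lborel {0<..<c} (\<lambda>t. of_real t powr (s - 1) :: complex)"
    and "(LINT t:{0<..<c}|lborel. of_real t powr (s - 1) :: complex) = of_real c powr s / s"
proof -
  have s0: "s \<noteq> 0" using s by auto
  have "((\<lambda>t. complex_of_real t powr (s - 1)) has_integral
            (of_real c powr s / s - of_real 0 powr s / s)) {0..c}" using s c
    by (intro fundamental_theorem_of_calculus_interior)
       (auto intro!: continuous_intros derivative_eq_intros has_vector_derivative_real_field)
  hence h1: "((\<lambda>t. complex_of_real t powr (s - 1)) has_integral (of_real c powr s / s)) {0<..<c}"
    using has_integral_open_interval[of "\<lambda>t. complex_of_real t powr (s - 1)" _ 0 c] by simp
  have "((\<lambda>t. t powr (Re s - 1)) has_integral (c powr (Re s - 1 + 1) / (Re s - 1 + 1))) {0..c}"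
    using has_integral_powr_from_0[of "Re s - 1" c] s c by simp
  hence h2: "(\<lambda>t. t powr (Re s - 1)) integrable_on {0<..<c}"
    using has_integral_open_interval[of "\<lambda>t. t powr (Re s - 1)" _ 0 c] by (auto simp: integrable_on_def)
  have ai: "(\<lambda>t. complex_of_real t powr (s - 1)) absolutely_integrable_on {0<..<c}"
  proof (rule absolutely_integrable_integrable_bound[OF _ _ h2])
    show "(\<lambda>t. complex_of_real t powr (s - 1)) integrable_on {0<..<c}" using h1 by (auto simp: integrable_on_def)
    fix x :: real assume "x \<in> {0<..<c}"
    thus "norm (complex_of_real x powr (s - 1)) \<le> x powr (Re s - 1)"
      by (simp add: norm_powr_real_powr)
  qed
  have m: "(\<lambda>t. complex_of_real t powr (s - 1)) \<in> borel_measurable borel" by measurable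
  show si: "set_integrable lborel {0<..<c} (\<lambda>t. of_real t powr (s - 1) :: complex)"
    using bridge(1)[OF _ m, of "{0<..<c}"] ai by simp
  show "(LINT t:{0<..<c}|lborel. of_real t powr (s - 1) :: complex) = of_real c powr s / s"
    using bridge(2)[OF _ m si] h1 by (simp add: integral_unique)
qed

definition ui :: "complex \<Rightarrow> complex \<Rightarrow> real \<Rightarrow> complex" where
  "ui b s u = of_real u powr (b - 1) * of_real (- ln u) powr (s - 1)"

lemma ui_measurable [measurable]: "ui b s \<in> borel_measurable borel"
  unfolding ui_def by measurable

lemma exp_image1: "(\<lambda>t. exp (- t)) ` {0<..} = {0<..<(1::real)}"
proof
  show "{0<..<1} \<subseteq> (\<lambda>t::real. exp (- t)) ` {0<..}"
  proof
    fix y :: real assume y: "y \<in> {0<..<1}"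
    thus "y \<in> (\<lambda>t. exp (- t)) ` {0<..}" by (intro image_eqI[of _ _ "- ln y"]) (auto simp: ln_less_zero)
  qed
qed auto

lemma exp_image2: assumes "0 < u" "u < (1::real)"
  shows "(\<lambda>t. exp (- t)) ` {0<..<- ln u} = {u<..<1}"
proof
  show "{u<..<1} \<subseteq> (\<lambda>t. exp (- t)) ` {0<..<- ln u}"
  proof
    fix y :: real assume y: "y \<in> {u<..<1}"
    thus "y \<in> (\<lambda>t. exp (- t)) ` {0<..<- ln u}" using assms
      by (intro image_eqI[of _ _ "- ln y"]) (auto simp: ln_less_zero)
  qed
next
  show "(\<lambda>t. exp (- t)) ` {0<..<- ln u} \<subseteq> {u<..<1}"
  proof
    fix y assume "y \<in> (\<lambda>t. exp (- t)) ` {0<..<- ln u}"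
    then obtain t where t: "0 < t" "t < - ln u" "y = exp (- t)" by auto
    have "ln u < - t" using t by simp
    hence "exp (ln u) < exp (- t)" by simp
    thus "y \<in> {u<..<1}" using t assms by simp
  qed
qed

lemma expm_der: "((\<lambda>t. exp (- t)) has_field_derivative - exp (- x)) (at x within S)"
  by (auto intro!: derivative_eq_intros)

lemma expm_inj: "inj_on (\<lambda>t::real. exp (- t)) S"
  by (auto intro!: inj_onI)

lemma ui_integral:
  assumes s: "Re s > 0" and b: "Re b > 0"
  shows "set_integrable lborel {0<..<1} (ui b s)"
    and "(LINT u:{0<..<1}|lborel. ui b s u) = Gamma s * b powr (- s)"
proof -
  have fgm: "(\<lambda>x. \<bar>- exp (- x)\<bar> *\<^sub>R ui b s (exp (- x))) \<in> borel_measurable borel" by measurable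
  note cov = cov_lborel[of "{0<..}", OF _ _ ui_measurable fgm expm_der expm_inj, unfolded exp_image1, simplified]
  have pt: "\<bar>- exp (- x)\<bar> *\<^sub>R ui b s (exp (- x)) = gi s b x" if "x \<in> {0<..}" for x
  proof -
    have ex: "complex_of_real (exp (- x)) = exp (of_real (- x))" by (simp only: exp_of_real)
    have "complex_of_real (exp (- x)) powr (b - 1) = exp ((b - 1) * of_real (- x))"
      by (simp add: powr_def exp_of_real[symmetric] Ln_of_real)
    hence "\<bar>- exp (- x)\<bar> *\<^sub>R ui b s (exp (- x)) = exp (of_real (- x)) * exp ((b - 1) * of_real (- x)) * of_real x powr (s - 1)"
      by (simp add: ui_def scaleR_conv_of_real ex)
    also have "exp (of_real (- x)) * exp ((b - 1) * of_real (- x)) = exp (- b * of_real x)"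
      by (simp add: exp_add[symmetric] algebra_simps)
    finally show ?thesis by (simp add: gi_def mult.commute)
  qed
  have i1: "set_integrable lborel {0<..} (\<lambda>x. \<bar>- exp (- x)\<bar> *\<^sub>R ui b s (exp (- x)))"
    using gamma_scale(1)[OF s b] by (rule set_integrable_cong[THEN iffD1, rotated -1]) (use pt in auto)
  show i2: "set_integrable lborel {0<..<1} (ui b s)" using cov(1) i1 by simp
  have "(LINT u:{0<..<1}|lborel. ui b s u) = (LINT x:{0<..}|lborel. \<bar>- exp (- x)\<bar> *\<^sub>R ui b s (exp (- x)))"
    using cov(2) i2 by simp
  also have "\<dots> = (LINT x:{0<..}|lborel. gi s b x)"
    by (rule set_lebesgue_integral_cong) (use pt in auto)
  also have "\<dots> = Gamma s * b powr (- s)" by (rule gamma_scale(2)[OF s b])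
  finally show "(LINT u:{0<..<1}|lborel. ui b s u) = Gamma s * b powr (- s)" .
qed

lemma inner_integral:
  assumes s: "Re s > 0" and u: "0 < u" "u < 1"
  shows "set_integrable lborel {u<..<1} (\<lambda>y. of_real (- ln y) powr (s - 1) / of_real y)"
    and "(LINT y:{u<..<1}|lborel. of_real (- ln y) powr (s - 1) / of_real y) = of_real (- ln u) powr s / s"
proof -
  define f where "f = (\<lambda>y::real. of_real (- ln y) powr (s - 1) / (of_real y :: complex))"
  have fm: "f \<in> borel_measurable borel" unfolding f_def by measurable
  have fgm: "(\<lambda>x. \<bar>- exp (- x)\<bar> *\<^sub>R f (exp (- x))) \<in> borel_measurable borel" unfolding f_def by measurable
  have c: "- ln u > 0" using u by (simp add: ln_less_zero)
  note cov = cov_lborel[of "{0<..<- ln u}", OF _ _ fm fgm expm_der expm_inj, unfolded exp_image2[OF u], simplified]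
  have pt: "\<bar>- exp (- x)\<bar> *\<^sub>R f (exp (- x)) = of_real x powr (s - 1)" if "x \<in> {0<..<- ln u}" for x
    by (simp add: f_def scaleR_conv_of_real)
  note P = pow_int[OF s c]
  have i1: "set_integrable lborel {0<..<- ln u} (\<lambda>x. \<bar>- exp (- x)\<bar> *\<^sub>R f (exp (- x)))"
    using P(1) by (rule set_integrable_cong[THEN iffD1, rotated -1]) (use pt in auto)
  show i2: "set_integrable lborel {u<..<1} (\<lambda>y. of_real (- ln y) powr (s - 1) / of_real y)"
    using cov(1) i1 by (simp add: f_def)
  have "(LINT y:{u<..<1}|lborel. f y) = (LINT x:{0<..<- ln u}|lborel. \<bar>- exp (- x)\<bar> *\<^sub>R f (exp (- x)))"
    using cov(2) i2 by (simp add: f_def)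
  also have "\<dots> = (LINT x:{0<..<- ln u}|lborel. of_real x powr (s - 1))"
    by (rule set_lebesgue_integral_cong) (use pt in auto)
  also have "\<dots> = of_real (- ln u) powr s / s" by (rule P(2))
  finally show "(LINT y:{u<..<1}|lborel. of_real (- ln y) powr (s - 1) / of_real y) = of_real (- ln u) powr s / s"
    by (simp add: f_def)
qed




lemma emeasure_Ioi_inf: "emeasure lborel {(a::real)<..} = \<infinity>"
proof (rule ccontr)
  assume "emeasure lborel {a<..} \<noteq> \<infinity>"
  then obtain r where r: "emeasure lborel {a<..} = ennreal r" "r \<ge> 0"
    using ennreal_cases[of "emeasure lborel {a<..}"] by auto
  have "emeasure lborel {a<..<a + r + 1} \<le> emeasure lborel {a<..}"
    by (intro emeasure_mono) auto
  hence "ennreal (r + 1) \<le> ennreal r" using r by simp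
  thus False using r by (simp add: ennreal_le_iff)
qed

lemma const_not_int: "\<not> set_integrable lborel {(a::real)<..} (\<lambda>_. 1::real)"
  unfolding set_integrable_def using emeasure_Ioi_inf[of a]
  by (simp add: integrable_indicator_iff)

lemma cov_lborel':
  fixes f :: "real \<Rightarrow> 'b::euclidean_space" and g h :: "real \<Rightarrow> real"
  assumes S: "S \<in> sets borel" and gS: "g ` S \<in> sets borel"
    and fm: "f \<in> borel_measurable borel"
    and fgm: "(\<lambda>x. \<bar>h x\<bar> *\<^sub>R f (g x)) \<in> borel_measurable borel"
    and der: "\<And>x. x \<in> S \<Longrightarrow> (g has_field_derivative h x) (at x within S)"
    and inj: "inj_on g S"
  shows "set_integrable lborel S (\<lambda>x. \<bar>h x\<bar> *\<^sub>R f (g x)) \<longleftrightarrow> set_integrable lborel (g ` S) f"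
proof -
  have Sl: "S \<in> sets lebesgue" using S by simp
  note cv = has_absolute_integral_change_of_variables_real[OF Sl der inj]
  show "set_integrable lborel S (\<lambda>x. \<bar>h x\<bar> *\<^sub>R f (g x)) \<longleftrightarrow> set_integrable lborel (g ` S) f"
    using cv[of f "integral (g ` S) f"] cv[of f "integral S (\<lambda>x. \<bar>h x\<bar> *\<^sub>R f (g x))"]
    by (simp add: bridge(1)[OF S fgm] bridge(1)[OF gS fm]) blast
qed

lemma exp_image3: "(\<lambda>t. exp (- t)) ` {a<..} = {0<..<exp (- a::real)}"
proof
  show "{0<..<exp (- a)} \<subseteq> (\<lambda>t::real. exp (- t)) ` {a<..}"
  proof
    fix y :: real assume y: "y \<in> {0<..<exp (- a)}"
    hence "ln y < - a" using ln_less_cancel_iff[of y "exp (- a)"] by simp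
    thus "y \<in> (\<lambda>t. exp (- t)) ` {a<..}" using y by (intro image_eqI[of _ _ "- ln y"]) auto
  qed
qed auto

lemma exp_image4: "(\<lambda>t. exp t) ` {0<..} = {(1::real)<..}"
proof
  show "{1<..} \<subseteq> (\<lambda>t::real. exp t) ` {0<..}"
  proof
    fix y :: real assume y: "y \<in> {1<..}"
    thus "y \<in> (\<lambda>t. exp t) ` {0<..}" by (intro image_eqI[of _ _ "ln y"]) auto
  qed
qed auto

lemma inv_not_int0:
  assumes c: "c > 0"
  shows "\<not> set_integrable lborel {0<..<c} (\<lambda>t::real. 1 / t)"
proof
  assume i: "set_integrable lborel {0<..<c} (\<lambda>t::real. 1 / t)"
  have fm: "(\<lambda>t::real. 1 / t) \<in> borel_measurable borel" by measurable
  have fgm: "(\<lambda>x. \<bar>- exp (- x)\<bar> *\<^sub>R (1 / exp (- x))) \<in> borel_measurable borel" by measurable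
  note cv = cov_lborel'[of "{- ln c<..}", OF _ _ fm fgm expm_der expm_inj, unfolded exp_image3]
  have "set_integrable lborel {- ln c<..} (\<lambda>x. \<bar>- exp (- x)\<bar> *\<^sub>R (1 / exp (- x)))"
    using cv i c by simp
  hence "set_integrable lborel {- ln c<..} (\<lambda>_. 1::real)"
    by (rule set_integrable_cong[THEN iffD1, rotated -1]) auto
  thus False using const_not_int by blast
qed

lemma inv_not_int1: "\<not> set_integrable lborel {1<..} (\<lambda>t::real. 1 / t)"
proof
  assume i: "set_integrable lborel {1<..} (\<lambda>t::real. 1 / t)"
  have fm: "(\<lambda>t::real. 1 / t) \<in> borel_measurable borel" by measurable
  have fgm: "(\<lambda>x. \<bar>exp x\<bar> *\<^sub>R (1 / exp x)) \<in> borel_measurable borel" by measurable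
  have der: "\<And>x. ((\<lambda>t. exp t) has_field_derivative exp x) (at x within S)" for S
    by (auto intro!: derivative_eq_intros)
  note cv = cov_lborel'[of "{0<..}", OF _ _ fm fgm der, unfolded exp_image4]
  have "set_integrable lborel {0<..} (\<lambda>x. \<bar>exp x\<bar> *\<^sub>R (1 / exp x))"
    using cv i by (simp add: inj_on_def)
  moreover have "set_integrable lborel {0<..} (\<lambda>x. \<bar>exp x\<bar> *\<^sub>R (1 / exp x)) = set_integrable lborel {(0::real)<..} (\<lambda>_. 1::real)"
    by (rule set_integrable_cong) auto
  ultimately have "set_integrable lborel {(0::real)<..} (\<lambda>_. 1::real)" by simp
  thus False using const_not_int by blast
qed




definition DD :: "(real \<times> real) set" where "DD = {0<..<1} \<times> {0<..<1}"
definition TT :: "(real \<times> real) set" where "TT = {p. 0 < fst p \<and> fst p < snd p \<and> snd p < 1}"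

lemma DD_sets [measurable]: "DD \<in> sets borel"
  unfolding DD_def by (simp add: borel_prod[symmetric])
lemma TT_open: "open TT"
proof -
  have "TT = {p. 0 < fst p} \<inter> {p. fst p < snd p} \<inter> {p::real\<times>real. snd p < 1}"
    by (auto simp: TT_def)
  also have "open \<dots>"
    by (intro open_Int open_Collect_less continuous_intros)
  finally show ?thesis .
qed

lemma TT_sets [measurable]: "TT \<in> sets borel"
  using TT_open by simp

lemma Psi_meas [measurable]: "(\<lambda>p::real\<times>real. (fst p * snd p, snd p)) \<in> borel_measurable borel"
  by (intro borel_measurable_continuous_onI continuous_intros)

lemma snd_meas [measurable]: "(snd :: real\<times>real \<Rightarrow> real) \<in> borel_measurable borel"
  by (intro borel_measurable_continuous_onI continuous_intros)

lemma pair_meas [measurable]: "(\<lambda>u::real. (u, y::real)) \<in> borel_measurable borel"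
  by (intro borel_measurable_continuous_onI continuous_intros)

lemma TT_ind_meas [measurable]: "(\<lambda>p::real\<times>real. indicator TT p / snd p) \<in> borel_measurable borel"
proof -
  have "indicator TT \<in> (borel_measurable borel :: (real\<times>real \<Rightarrow> real) set)"
    using TT_sets by (rule borel_measurable_indicator)
  thus ?thesis using snd_meas by (intro borel_measurable_divide) auto
qed

lemma NN:
  fixes f :: "real \<times> real \<Rightarrow> ennreal"
  assumes f[measurable]: "f \<in> borel_measurable borel"
  shows "(\<integral>\<^sup>+ p. indicator DD p * f (fst p * snd p, snd p) \<partial>lborel) =
         (\<integral>\<^sup>+ p. ennreal (indicator TT p / snd p) * f p \<partial>lborel)"
proof -
  have inner: "(\<integral>\<^sup>+ x. indicator DD (x, y) * f (x * y, y) \<partial>lborel) =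
               (\<integral>\<^sup>+ u. ennreal (indicator TT (u, y) / y) * f (u, y) \<partial>lborel)" for y :: real
  proof (cases "0 < y \<and> y < 1")
    case False
    hence "\<And>u. indicator TT (u, y) = (0::real)" "\<And>x. indicator DD (x, y) = (0::ennreal)"
      by (auto simp: DD_def TT_def indicator_def)
    thus ?thesis by simp
  next
    case True
    hence y: "0 < y" "y < 1" by auto
    define F where "F = (\<lambda>u. indicator {0<..<y} u * f (u, y))"
    have fy: "(\<lambda>u. f (u, y)) \<in> borel_measurable borel"
      using measurable_comp[OF pair_meas[of y] f] by (simp add: comp_def)
    have Fm: "F \<in> borel_measurable borel" unfolding F_def using fy by measurable
    have "(\<integral>\<^sup>+ u. F u \<partial>lborel) = ennreal \<bar>y\<bar> * (\<integral>\<^sup>+ x. F (0 + y * x) \<partial>lborel)"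
      using nn_integral_real_affine[OF Fm, of y 0] y by simp
    also have "(\<lambda>x. F (0 + y * x)) = (\<lambda>x. indicator DD (x, y) * f (x * y, y))"
    proof
      fix x
      have "(0 < y * x \<and> y * x < y) \<longleftrightarrow> (0 < x \<and> x < 1)" using y
        by (auto simp: zero_less_mult_iff)
      thus "F (0 + y * x) = indicator DD (x, y) * f (x * y, y)"
        using y by (auto simp: F_def DD_def indicator_def mult.commute)
    qed
    finally have A: "(\<integral>\<^sup>+ u. F u \<partial>lborel) = ennreal y * (\<integral>\<^sup>+ x. indicator DD (x, y) * f (x * y, y) \<partial>lborel)"
      using y by simp
    have "(\<integral>\<^sup>+ u. ennreal (indicator TT (u, y) / y) * f (u, y) \<partial>lborel) =
          (\<integral>\<^sup>+ u. ennreal (1 / y) * F u \<partial>lborel)"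
      using y by (intro nn_integral_cong) (auto simp: TT_def F_def indicator_def)
    also have "\<dots> = ennreal (1 / y) * (\<integral>\<^sup>+ u. F u \<partial>lborel)"
      by (rule nn_integral_cmult) (use Fm in simp)
    also have "\<dots> = (ennreal (1 / y) * ennreal y) * (\<integral>\<^sup>+ x. indicator DD (x, y) * f (x * y, y) \<partial>lborel)"
      unfolding A by (simp add: mult.assoc)
    also have "ennreal (1 / y) * ennreal y = 1"
      using y by (simp add: ennreal_mult[symmetric])
    finally show ?thesis by simp
  qed
  have "(\<integral>\<^sup>+ p. indicator DD p * f (fst p * snd p, snd p) \<partial>lborel) =
        (\<integral>\<^sup>+ p. indicator DD p * f (fst p * snd p, snd p) \<partial>(lborel \<Otimes>\<^sub>M lborel))"
    by (simp add: lborel_prod)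
  also have "\<dots> = (\<integral>\<^sup>+ y. (\<integral>\<^sup>+ x. indicator DD (x, y) * f (x * y, y) \<partial>lborel) \<partial>lborel)"
    by (subst lborel_pair.nn_integral_snd[symmetric]) (simp_all add: lborel_prod)
  also have "\<dots> = (\<integral>\<^sup>+ y. (\<integral>\<^sup>+ u. ennreal (indicator TT (u, y) / y) * f (u, y) \<partial>lborel) \<partial>lborel)"
    by (simp add: inner)
  also have "\<dots> = (\<integral>\<^sup>+ p. ennreal (indicator TT p / snd p) * f p \<partial>(lborel \<Otimes>\<^sub>M lborel))"
    by (subst lborel_pair.nn_integral_snd[symmetric]) (simp_all add: lborel_prod)
  also have "\<dots> = (\<integral>\<^sup>+ p. ennreal (indicator TT p / snd p) * f p \<partial>lborel)"
    by (simp add: lborel_prod)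
  finally show ?thesis .
qed

lemma distr_eq:
  "distr (density lborel (\<lambda>p. ennreal (indicator DD p))) lborel (\<lambda>p::real\<times>real. (fst p * snd p, snd p))
   = density lborel (\<lambda>p. ennreal (indicator TT p / snd p))"
proof (rule measure_eqI)
  fix A assume "A \<in> sets (distr (density lborel (\<lambda>p. ennreal (indicator DD p))) lborel (\<lambda>p::real\<times>real. (fst p * snd p, snd p)))"
  hence A[measurable]: "A \<in> sets borel" by simp
  have "emeasure (distr (density lborel (\<lambda>p. ennreal (indicator DD p))) lborel (\<lambda>p::real\<times>real. (fst p * snd p, snd p))) A
      = (\<integral>\<^sup>+ p. indicator DD p * indicator A (fst p * snd p, snd p) \<partial>lborel)"
  proof -
    have "(\<lambda>p::real\<times>real. (fst p * snd p, snd p)) -` A \<in> sets lborel"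
      using measurable_sets[OF Psi_meas A] by simp
    thus ?thesis
      by (subst emeasure_distr) (auto simp: emeasure_density intro!: nn_integral_cong split: split_indicator)
  qed
  also have "\<dots> = (\<integral>\<^sup>+ p. ennreal (indicator TT p / snd p) * indicator A p \<partial>lborel)"
    by (rule NN) measurable
  also have "\<dots> = emeasure (density lborel (\<lambda>p. ennreal (indicator TT p / snd p))) A"
    by (subst emeasure_density) auto
  finally show "emeasure (distr (density lborel (\<lambda>p. ennreal (indicator DD p))) lborel (\<lambda>p::real\<times>real. (fst p * snd p, snd p))) A
      = emeasure (density lborel (\<lambda>p. ennreal (indicator TT p / snd p))) A" .
qed simp

lemma transfer:
  fixes g :: "real \<times> real \<Rightarrow> complex"
  assumes g[measurable]: "g \<in> borel_measurable borel"
  shows "set_integrable lborel DD (\<lambda>p. g (fst p * snd p, snd p)) \<longleftrightarrow>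
           integrable lborel (\<lambda>p. (indicator TT p / snd p) *\<^sub>R g p)"
    and "(LINT p:DD|lborel. g (fst p * snd p, snd p)) = integral\<^sup>L lborel (\<lambda>p. (indicator TT p / snd p) *\<^sub>R g p)"
proof -
  let ?M1 = "density lborel (\<lambda>p. ennreal (indicator DD p))"
  let ?P = "\<lambda>p::real\<times>real. (fst p * snd p, snd p)"
  have Pm: "?P \<in> measurable ?M1 lborel" by simp
  have nn: "AE p in lborel. 0 \<le> indicator TT p / snd p"
    by (intro AE_I2) (auto simp: TT_def indicator_def)
  have "set_integrable lborel DD (\<lambda>p. g (?P p)) \<longleftrightarrow> integrable ?M1 (\<lambda>p. g (?P p))"
    unfolding set_integrable_def by (subst integrable_density) auto
  also have "\<dots> \<longleftrightarrow> integrable (distr ?M1 lborel ?P) g"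
    by (rule integrable_distr_eq[symmetric]) (auto simp: Pm)
  also have "\<dots> \<longleftrightarrow> integrable (density lborel (\<lambda>p. ennreal (indicator TT p / snd p))) g"
    by (simp add: distr_eq)
  also have "\<dots> \<longleftrightarrow> integrable lborel (\<lambda>p. (indicator TT p / snd p) *\<^sub>R g p)"
    by (rule integrable_density) (auto simp: nn)
  finally show "set_integrable lborel DD (\<lambda>p. g (fst p * snd p, snd p)) \<longleftrightarrow>
           integrable lborel (\<lambda>p. (indicator TT p / snd p) *\<^sub>R g p)" .
  have "(LINT p:DD|lborel. g (?P p)) = integral\<^sup>L ?M1 (\<lambda>p. g (?P p))"
    unfolding set_lebesgue_integral_def by (subst integral_density) auto
  also have "\<dots> = integral\<^sup>L (distr ?M1 lborel ?P) g"
    by (rule integral_distr[symmetric]) (auto simp: Pm)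
  also have "\<dots> = integral\<^sup>L (density lborel (\<lambda>p. ennreal (indicator TT p / snd p))) g"
    by (simp add: distr_eq)
  also have "\<dots> = integral\<^sup>L lborel (\<lambda>p. (indicator TT p / snd p) *\<^sub>R g p)"
    by (rule integral_density) (auto simp: nn)
  finally show "(LINT p:DD|lborel. g (fst p * snd p, snd p)) = integral\<^sup>L lborel (\<lambda>p. (indicator TT p / snd p) *\<^sub>R g p)" .
qed




lemma ae_exists:
  assumes "AE x in lborel. P x" "a < (b::real)"
  shows "\<exists>x\<in>{a<..<b}. P x"
proof (rule ccontr)
  assume "\<not> (\<exists>x\<in>{a<..<b}. P x)"
  from assms(1) obtain N where N: "{x \<in> space lborel. \<not> P x} \<subseteq> N" "emeasure lborel N = 0" "N \<in> sets lborel"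
    by (rule AE_E)
  have "{a<..<b} \<subseteq> N" using N(1) \<open>\<not> _\<close> by auto
  hence "emeasure lborel {a<..<b} \<le> emeasure lborel N" using N(3) by (intro emeasure_mono) auto
  thus False using N(2) assms(2) by simp
qed

lemma sigma_pos:
  assumes u: "0 < u" "u < 1"
    and i: "set_integrable lborel {u<..<1} (\<lambda>y. of_real (- ln y) powr (s - 1) / (of_real y :: complex))"
  shows "Re s > 0"
proof (rule ccontr)
  assume "\<not> Re s > 0"
  hence s: "Re s \<le> 0" by simp
  define f where "f = (\<lambda>y::real. of_real (- ln y) powr (s - 1) / (of_real y :: complex))"
  have fm: "f \<in> borel_measurable borel" unfolding f_def by measurable
  have fgm: "(\<lambda>x. \<bar>- exp (- x)\<bar> *\<^sub>R f (exp (- x))) \<in> borel_measurable borel" unfolding f_def by measurable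
  have c: "- ln u > 0" using u by (simp add: ln_less_zero)
  note cov = cov_lborel[of "{0<..<- ln u}", OF _ _ fm fgm expm_der expm_inj, unfolded exp_image2[OF u], simplified]
  have pt: "\<bar>- exp (- x)\<bar> *\<^sub>R f (exp (- x)) = of_real x powr (s - 1)" if "x \<in> {0<..<- ln u}" for x
    by (simp add: f_def scaleR_conv_of_real)
  have "set_integrable lborel {0<..<- ln u} (\<lambda>x. \<bar>- exp (- x)\<bar> *\<^sub>R f (exp (- x)))"
    using cov(1) i by (simp add: f_def)
  hence i1: "set_integrable lborel {0<..<- ln u} (\<lambda>x. of_real x powr (s - 1) :: complex)"
    by (rule set_integrable_cong[THEN iffD1, rotated -1]) (use pt in auto)
  define c' where "c' = min (- ln u) 1"
  have c': "c' > 0" "c' \<le> 1" "c' \<le> - ln u" using c by (auto simp: c'_def)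
  have i2: "set_integrable lborel {0<..<c'} (\<lambda>x. of_real x powr (s - 1) :: complex)"
    using c' by (intro set_integrable_subset[OF i1]) auto
  have "set_integrable lborel {0<..<c'} (\<lambda>t::real. 1 / t)"
  proof (rule set_integrable_bound[OF i2])
    show "set_borel_measurable lborel {0<..<c'} (\<lambda>t::real. 1 / t)"
      unfolding set_borel_measurable_def by measurable
    show "AE x in lborel. x \<in> {0<..<c'} \<longrightarrow> norm (1 / x) \<le> norm (of_real x powr (s - 1) :: complex)"
    proof (intro AE_I2 impI)
      fix x :: real assume x: "x \<in> {0<..<c'}"
      hence "norm (of_real x powr (s - 1) :: complex) = x powr (Re s - 1)" by (simp add: norm_powr_real_powr)
      moreover have "x powr (-1) \<le> x powr (Re s - 1)" using x c' s by (intro powr_mono') auto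
      ultimately show "norm (1 / x) \<le> norm (of_real x powr (s - 1) :: complex)"
        using x by (simp add: powr_minus divide_inverse)
    qed
  qed
  thus False using inv_not_int0[OF c'(1)] by blast
qed

lemma alpha_pos:
  assumes s: "Re s > 0"
    and i: "set_integrable lborel {0<..<1} (\<lambda>u::real. u powr (Re a - 1) * (- ln u) powr (Re s - 1))"
  shows "Re a > 0"
proof (rule ccontr)
  assume "\<not> Re a > 0"
  hence a: "Re a \<le> 0" by simp
  define f where "f = (\<lambda>u::real. u powr (Re a - 1) * (- ln u) powr (Re s - 1))"
  have fm: "f \<in> borel_measurable borel" unfolding f_def by measurable
  have fgm: "(\<lambda>x. \<bar>- exp (- x)\<bar> *\<^sub>R f (exp (- x))) \<in> borel_measurable borel" unfolding f_def by measurable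
  note cov = cov_lborel'[of "{0<..}", OF _ _ fm fgm expm_der expm_inj, unfolded exp_image1, simplified]
  have i1: "set_integrable lborel {0<..} (\<lambda>x. \<bar>- exp (- x)\<bar> *\<^sub>R f (exp (- x)))"
    using cov i by (simp add: f_def)
  have i2: "set_integrable lborel {1<..} (\<lambda>x. \<bar>- exp (- x)\<bar> *\<^sub>R f (exp (- x)))"
    by (intro set_integrable_subset[OF i1]) auto
  have "set_integrable lborel {1<..} (\<lambda>t::real. 1 / t)"
  proof (rule set_integrable_bound[OF i2])
    show "set_borel_measurable lborel {1<..} (\<lambda>t::real. 1 / t)"
      unfolding set_borel_measurable_def by measurable
    show "AE x in lborel. x \<in> {1<..} \<longrightarrow> norm (1 / x) \<le> norm (\<bar>- exp (- x)\<bar> *\<^sub>R f (exp (- x)))"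
    proof (intro AE_I2 impI)
      fix x :: real assume x: "x \<in> {1<..}"
      have e: "\<bar>- exp (- x)\<bar> *\<^sub>R f (exp (- x)) = exp (- (Re a * x)) * x powr (Re s - 1)"
      proof -
        have "exp (- x) powr (Re a - 1) = exp (- x * (Re a - 1))" by (simp add: powr_def)
        hence "\<bar>- exp (- x)\<bar> *\<^sub>R f (exp (- x)) = exp (- x) * exp (- x * (Re a - 1)) * x powr (Re s - 1)"
          by (simp add: f_def)
        also have "exp (- x) * exp (- x * (Re a - 1)) = exp (- (Re a * x))"
          by (simp add: exp_add[symmetric] algebra_simps)
        finally show ?thesis .
      qed
      have "1 \<le> exp (- (Re a * x))" using a x by (simp add: mult_nonpos_nonneg)
      moreover have "x powr (-1) \<le> x powr (Re s - 1)" using x s by (intro powr_mono) auto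
      ultimately have "x powr (-1) \<le> exp (- (Re a * x)) * x powr (Re s - 1)"
        by (metis mult_le_cancel_right1 order_trans powr_ge_zero dual_order.order_iff_strict mult_less_cancel_right2 not_le)
      thus "norm (1 / x) \<le> norm (\<bar>- exp (- x)\<bar> *\<^sub>R f (exp (- x)))"
        unfolding e using x by (simp add: powr_minus divide_inverse)
    qed
  qed
  thus False using inv_not_int1 by blast
qed




lemma fst_meas [measurable]: "(fst :: real\<times>real \<Rightarrow> real) \<in> borel_measurable borel"
  by (intro borel_measurable_continuous_onI continuous_intros)

definition gg :: "complex \<Rightarrow> complex \<Rightarrow> complex \<Rightarrow> real \<times> real \<Rightarrow> complex" where
  "gg z s a p = - s * of_real (fst p) powr (a - 1) * of_real (- ln (snd p)) powr (s - 1)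
                 / ((1 - z * of_real (fst p)) * of_real (ln (fst p)))"

lemma gg_meas [measurable]: "gg z s a \<in> borel_measurable borel"
  unfolding gg_def by measurable

lemma main_lerch:
  fixes z s a :: complex
  assumes sG: "s \<notin> \<int>\<^sub>\<le>\<^sub>0"
    and sm: "summable (\<lambda>k. z ^ k / (of_nat k + a) powr s)"
    and int: "set_integrable lborel DD (\<lambda>p. gg z s a (fst p * snd p, snd p))"
  shows "(\<Sum>k. z ^ k / (of_nat k + a) powr s) * Gamma s = (LINT p:DD|lborel. gg z s a (fst p * snd p, snd p))"
proof -
  have s0: "s \<noteq> 0" using sG by auto
  have nz: "norm z \<le> 1" by (rule summable_lerch_norm_le1[OF sm])
  have zu: "norm (z * of_real u) < 1" if "0 < u" "u < 1" for u
  proof -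
    have "norm (z * of_real u) = norm z * u" using that by (simp add: norm_mult)
    also have "\<dots> \<le> 1 * u" using nz that by (intro mult_right_mono) auto
    finally show ?thesis using that by simp
  qed
  have zu1: "1 - z * of_real u \<noteq> 0" if "0 < u" "u < 1" for u
    using zu[OF that] by (metis eq_iff_diff_eq_0 norm_one order.irrefl)
  define H where "H = (\<lambda>p::real\<times>real. (indicator TT p / snd p) *\<^sub>R gg z s a p)"
  have Hm [measurable]: "H \<in> borel_measurable borel" unfolding H_def by measurable
  have Hi: "integrable lborel H" using transfer(1)[OF gg_meas] int by (simp add: H_def)
  have Heq: "(LINT p:DD|lborel. gg z s a (fst p * snd p, snd p)) = integral\<^sup>L lborel H"
    using transfer(2)[OF gg_meas] by (simp add: H_def)
  have Hi2: "integrable (lborel \<Otimes>\<^sub>M lborel) H" using Hi by (simp add: lborel_prod)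
  note F1 = lborel_pair.AE_integrable_fst'[OF Hi2]
  note F2 = lborel_pair.integrable_fst'[OF Hi2]
  note F3 = lborel_pair.integral_fst'[OF Hi2]
  define G where "G = (\<lambda>u::real. - s * of_real u powr (a - 1) / ((1 - z * of_real u) * of_real (ln u)))"
  define B where "B = (\<lambda>y::real. of_real (- ln y) powr (s - 1) / (of_real y :: complex))"
  have slice: "(\<lambda>y. H (u, y)) = (\<lambda>y. indicator {u<..<1} y *\<^sub>R (G u * B y))" if u: "0 < u" "u < 1" for u
  proof
    fix y :: real
    show "H (u, y) = indicator {u<..<1} y *\<^sub>R (G u * B y)"
    proof (cases "u < y \<and> y < 1")
      case True
      thus ?thesis using u by (simp add: H_def TT_def gg_def G_def B_def indicator_def scaleR_conv_of_real field_simps)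
    qed (auto simp: H_def TT_def indicator_def)
  qed
  have slice0: "(\<lambda>y. H (u, y)) = (\<lambda>y. 0)" if u: "\<not> (0 < u \<and> u < 1)" for u
    using u by (auto simp: H_def TT_def indicator_def)
  have G0: "G u \<noteq> 0" if u: "0 < u" "u < 1" for u
    using u s0 zu1[OF u] by (simp add: G_def ln_less_zero)
  have s: "Re s > 0"
  proof -
    obtain u where u: "u \<in> {0<..<1}" "integrable lborel (\<lambda>y. H (u, y))"
      using ae_exists[OF F1, of 0 1] by auto
    hence u': "0 < u" "u < 1" by auto
    have "set_integrable lborel {u<..<1} (\<lambda>y. G u * B y)"
      using u(2) unfolding slice[OF u'] set_integrable_def .
    hence "set_integrable lborel {u<..<1} (\<lambda>y. inverse (G u) * (G u * B y))"
      by (rule set_integrable_mult_right)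
    hence "set_integrable lborel {u<..<1} B" using G0[OF u'] by (simp add: field_simps)
    thus ?thesis by (intro sigma_pos[OF u']) (simp add: B_def)
  qed
  define Q where "Q = (\<lambda>u. ui a s u / (1 - z * of_real u))"
  have inner: "(\<lambda>u. \<integral>y. H (u, y) \<partial>lborel) = (\<lambda>u. indicator {0<..<1} u *\<^sub>R Q u)"
  proof
    fix u :: real
    show "(\<integral>y. H (u, y) \<partial>lborel) = indicator {0<..<1} u *\<^sub>R Q u"
    proof (cases "0 < u \<and> u < 1")
      case True
      hence u: "0 < u" "u < 1" by auto
      have L: "- ln u > 0" using u by (simp add: ln_less_zero)
      have "(\<integral>y. H (u, y) \<partial>lborel) = (LINT y:{u<..<1}|lborel. G u * B y)"
        unfolding slice[OF u] set_lebesgue_integral_def ..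
      also have "\<dots> = G u * (LINT y:{u<..<1}|lborel. B y)" by simp
      also have "(LINT y:{u<..<1}|lborel. B y) = of_real (- ln u) powr s / s"
        using inner_integral(2)[OF s u] by (simp add: B_def)
      also have "G u * (of_real (- ln u) powr s / s) = Q u"
      proof -
        have "of_real (- ln u) powr s = of_real (- ln u) powr (s - 1) * (of_real (- ln u) :: complex)"
          using powr_add[of "of_real (- ln u) :: complex" "s - 1" 1] L by simp
        thus ?thesis using s0 L zu1[OF u]
          by (simp add: G_def Q_def ui_def field_simps)
      qed
      finally show ?thesis using u by simp
    next
      case False
      thus ?thesis unfolding slice0[OF False] by simp
    qed
  qed
  have Qi: "set_integrable lborel {0<..<1} Q"
    using F2 unfolding inner set_integrable_def .
  have eq1: "(LINT p:DD|lborel. gg z s a (fst p * snd p, snd p)) = (LINT u:{0<..<1}|lborel. Q u)"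
  proof -
    have "(LINT p:DD|lborel. gg z s a (fst p * snd p, snd p)) = integral\<^sup>L lborel H" by (rule Heq)
    also have "\<dots> = (\<integral>u. (\<integral>y. H (u, y) \<partial>lborel) \<partial>lborel)" using F3 by (simp add: lborel_prod)
    also have "\<dots> = (\<integral>u. indicator {0<..<1} u *\<^sub>R Q u \<partial>lborel)" by (simp only: inner)
    also have "\<dots> = (LINT u:{0<..<1}|lborel. Q u)" by (simp add: set_lebesgue_integral_def)
    finally show ?thesis .
  qed
  have a: "Re a > 0"
  proof (rule alpha_pos[OF s])
    have n: "set_integrable lborel {0<..<1} (\<lambda>u. 2 * norm (Q u))"
      using set_integrable_norm[OF Qi] by (rule set_integrable_mult_right)
    show "set_integrable lborel {0<..<1} (\<lambda>u::real. u powr (Re a - 1) * (- ln u) powr (Re s - 1))"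
    proof (rule set_integrable_bound[OF n])
      show "set_borel_measurable lborel {0<..<1} (\<lambda>u::real. u powr (Re a - 1) * (- ln u) powr (Re s - 1))"
        unfolding set_borel_measurable_def by measurable
      show "AE u in lborel. u \<in> {0<..<1} \<longrightarrow> norm (u powr (Re a - 1) * (- ln u) powr (Re s - 1)) \<le> norm (2 * norm (Q u))"
      proof (intro AE_I2 impI)
        fix u :: real assume "u \<in> {0<..<1}"
        hence u: "0 < u" "u < 1" by auto
        have L: "- ln u > 0" using u by (simp add: ln_less_zero)
        have nu: "norm (ui a s u) = u powr (Re a - 1) * (- ln u) powr (Re s - 1)"
          using u L by (simp add: ui_def norm_mult norm_powr_real_powr)
        have d: "norm (1 - z * of_real u) \<le> 2"
          using norm_triangle_ineq4[of 1 "z * of_real u"] zu[OF u] by simp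
        have d0: "norm (1 - z * of_real u) > 0" using zu1[OF u] by simp
        have "norm (ui a s u) \<le> 2 * norm (Q u)"
        proof -
          have "norm (ui a s u) = norm (Q u) * norm (1 - z * of_real u)"
            using zu1[OF u] by (simp add: Q_def norm_divide)
          also have "\<dots> \<le> norm (Q u) * 2" using d by (intro mult_left_mono) auto
          finally show ?thesis by simp
        qed
        thus "norm (u powr (Re a - 1) * (- ln u) powr (Re s - 1)) \<le> norm (2 * norm (Q u))"
          using nu by simp
      qed
    qed
  qed
  define SN where "SN = (\<lambda>N u. indicator {0<..<1} u *\<^sub>R (\<Sum>k<N. z ^ k * ui (a + of_nat k) s u))"
  define Qf where "Qf = (\<lambda>u. indicator {0<..<1} u *\<^sub>R Q u)"
  define W where "W = (\<lambda>u. indicator {0<..<1} u *\<^sub>R (2 * norm (Q u)))"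
  have SNm: "SN N \<in> borel_measurable lborel" for N unfolding SN_def by measurable
  have Qfm: "Qf \<in> borel_measurable lborel" unfolding Qf_def Q_def by measurable
  have Wi: "integrable lborel W"
    using set_integrable_mult_right[OF set_integrable_norm[OF Qi], of 2] by (simp add: W_def set_integrable_def)
  have ukey: "z ^ k * ui (a + of_nat k) s u = ui a s u * (z * of_real u) ^ k" if "0 < u" for u k
  proof -
    have "of_real u powr (a + of_nat k - 1) = of_real u powr (a - 1) * (of_real u powr of_nat k :: complex)"
      by (simp add: powr_add[symmetric] algebra_simps)
    also have "(of_real u powr of_nat k :: complex) = of_real u ^ k" using that by (simp add: powr_nat')
    finally show ?thesis by (simp add: ui_def power_mult_distrib algebra_simps)
  qed
  have SNeq: "SN N u = indicator {0<..<1} u *\<^sub>R (ui a s u * (\<Sum>k<N. (z * of_real u) ^ k))" for N u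
    by (cases "0 < u") (simp_all add: SN_def ukey sum_distrib_left indicator_def)
  have lim: "AE u in lborel. (\<lambda>N. SN N u) \<longlonglongrightarrow> Qf u"
  proof (rule AE_I2)
    fix u :: real
    show "(\<lambda>N. SN N u) \<longlonglongrightarrow> Qf u"
    proof (cases "0 < u \<and> u < 1")
      case True
      hence u: "0 < u" "u < 1" by auto
      have "(\<lambda>N. \<Sum>k<N. (z * of_real u) ^ k) \<longlonglongrightarrow> 1 / (1 - z * of_real u)"
        using geometric_sums[OF zu[OF u]] by (simp add: sums_def)
      hence "(\<lambda>N. ui a s u * (\<Sum>k<N. (z * of_real u) ^ k)) \<longlonglongrightarrow> ui a s u * (1 / (1 - z * of_real u))"
        by (intro tendsto_intros)
      thus ?thesis using u by (simp add: SNeq Qf_def Q_def)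
    next
      case False
      hence "indicator {0<..<1} u = (0::real)" by (auto simp: indicator_def)
      thus ?thesis by (simp add: SNeq Qf_def)
    qed
  qed
  have bound: "AE u in lborel. norm (SN N u) \<le> W u" for N
  proof (rule AE_I2)
    fix u :: real
    show "norm (SN N u) \<le> W u"
    proof (cases "0 < u \<and> u < 1")
      case True
      hence u: "0 < u" "u < 1" by auto
      have ne: "z * of_real u \<noteq> 1" using zu[OF u] by auto
      have "norm (\<Sum>k<N. (z * of_real u) ^ k) = norm (1 - (z * of_real u) ^ N) / norm (1 - z * of_real u)"
        using ne by (simp add: sum_gp_strict norm_divide)
      also have "\<dots> \<le> 2 / norm (1 - z * of_real u)"
      proof (intro divide_right_mono)
        have "norm ((z * of_real u) ^ N) \<le> 1" using zu[OF u] by (simp add: norm_power power_le_one)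
        thus "norm (1 - (z * of_real u) ^ N) \<le> 2"
          using norm_triangle_ineq4[of 1 "(z * of_real u) ^ N"] by simp
      qed simp
      finally have nb: "norm (\<Sum>k<N. (z * of_real u) ^ k) \<le> 2 / norm (1 - z * of_real u)" .
      hence "norm (ui a s u) * norm (\<Sum>k<N. (z * of_real u) ^ k) \<le> norm (ui a s u) * (2 / norm (1 - z * of_real u))"
        by (intro mult_left_mono) auto
      hence "norm (SN N u) \<le> norm (ui a s u) * (2 / norm (1 - z * of_real u))"
        using u by (simp add: SNeq norm_mult)
      also have "\<dots> = W u" using u by (simp add: W_def Q_def norm_divide)
      finally show ?thesis .
    next
      case False
      hence "indicator {0<..<1} u = (0::real)" by (auto simp: indicator_def)
      thus ?thesis by (simp add: SNeq W_def)
    qed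
  qed
  have conv: "(\<lambda>N. integral\<^sup>L lborel (SN N)) \<longlonglongrightarrow> integral\<^sup>L lborel Qf"
    by (rule integral_dominated_convergence[OF Qfm SNm Wi lim bound])
  have SNval: "integral\<^sup>L lborel (SN N) = (\<Sum>k<N. Gamma s * (z ^ k / (of_nat k + a) powr s))" for N
  proof -
    have ak: "Re (a + of_nat k) > 0" for k using a by simp
    have "integral\<^sup>L lborel (SN N) = integral\<^sup>L lborel (\<lambda>u. \<Sum>k<N. z ^ k * (indicator {0<..<1} u *\<^sub>R ui (a + of_nat k) s u))"
      by (simp add: SN_def scaleR_sum_right)
    also have "\<dots> = (\<Sum>k<N. integral\<^sup>L lborel (\<lambda>u. z ^ k * (indicator {0<..<1} u *\<^sub>R ui (a + of_nat k) s u)))"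
    proof (rule Bochner_Integration.integral_sum[where I="{..<N}" and M=lborel and f="\<lambda>k u. z ^ k * (indicator {0<..<1} u *\<^sub>R ui (a + of_nat k) s u)"])
      fix k show "integrable lborel (\<lambda>u. z ^ k * (indicator {0<..<1} u *\<^sub>R ui (a + of_nat k) s u))"
        using ui_integral(1)[OF s ak[of k]] by (intro integrable_mult_right) (auto simp: set_integrable_def)
    qed
    also have "\<dots> = (\<Sum>k<N. z ^ k * integral\<^sup>L lborel (\<lambda>u. indicator {0<..<1} u *\<^sub>R ui (a + of_nat k) s u))"
      by (intro sum.cong refl integral_mult_right_zero)
    also have "\<dots> = (\<Sum>k<N. z ^ k * (Gamma s * (a + of_nat k) powr (- s)))"
      using ui_integral(2)[OF s ak] unfolding set_lebesgue_integral_def by simp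
    also have "\<dots> = (\<Sum>k<N. Gamma s * (z ^ k / (of_nat k + a) powr s))"
      by (intro sum.cong refl) (simp add: powr_minus divide_inverse add.commute)
    finally show ?thesis .
  qed
  have "(\<lambda>N. \<Sum>k<N. Gamma s * (z ^ k / (of_nat k + a) powr s)) \<longlonglongrightarrow> Gamma s * (\<Sum>k. z ^ k / (of_nat k + a) powr s)"
    using sums_mult[OF summable_sums[OF sm], of "Gamma s"] by (simp add: sums_def)
  hence "integral\<^sup>L lborel Qf = Gamma s * (\<Sum>k. z ^ k / (of_nat k + a) powr s)"
    using conv unfolding SNval using LIMSEQ_unique by blast
  thus ?thesis unfolding eq1 by (simp add: Qf_def set_lebesgue_integral_def mult.commute)
qed


theorem theorem3p3:
  fixes z s a :: complex
  assumes Gamma_defined: "s \<notin> \<int>\<^sub>\<le>\<^sub>0"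
  shows "(summable (\<lambda>k. z ^ k / (of_nat k + a) powr s) \<and>
          set_integrable lborel ({0<..<1} \<times> {0<..<1})
            (\<lambda>(x::real, y::real). - s * (of_real (x * y)) powr (a - 1) * (of_real (- ln y)) powr (s - 1)
                 / ((1 - z * of_real x * of_real y) * of_real (ln (x * y))))
         \<longrightarrow> lerch_phi z s a * Gamma s =
             (LINT p : {0<..<1} \<times> {0<..<1} | lborel.
               (\<lambda>(x::real, y::real). - s * (of_real (x * y)) powr (a - 1) * (of_real (- ln y)) powr (s - 1)
                 / ((1 - z * of_real x * of_real y) * of_real (ln (x * y)))) p))
       \<and> (summable (\<lambda>k. 1 / (of_nat (Suc k)) powr s) \<and>
          set_integrable lborel ({0<..<1} \<times> {0<..<1})
            (\<lambda>(x::real, y::real). - s * (of_real (- ln y)) powr (s - 1)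
                 / ((1 - of_real (x * y)) * of_real (ln (x * y))))
         \<longrightarrow> riemann_zeta s * Gamma s =
             (LINT p : {0<..<1} \<times> {0<..<1} | lborel.
               (\<lambda>(x::real, y::real). - s * (of_real (- ln y)) powr (s - 1)
                 / ((1 - of_real (x * y)) * of_real (ln (x * y)))) p))"
proof -
  have feq: "(\<lambda>(x::real, y::real). - s' * (of_real (x * y)) powr (a' - 1) * (of_real (- ln y)) powr (s' - 1)
                 / ((1 - z' * of_real x * of_real y) * of_real (ln (x * y))))
           = (\<lambda>p. gg z' s' a' (fst p * snd p, snd p))" for z' s' a' :: complex
    by (auto simp: fun_eq_iff gg_def mult.assoc)
  have P1: "lerch_phi z' s a' * Gamma s =
             (LINT p : {0<..<1} \<times> {0<..<1} | lborel.
               (\<lambda>(x::real, y::real). - s * (of_real (x * y)) powr (a' - 1) * (of_real (- ln y)) powr (s - 1)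
                 / ((1 - z' * of_real x * of_real y) * of_real (ln (x * y)))) p)"
    if sm: "summable (\<lambda>k. z' ^ k / (of_nat k + a') powr s)"
      and int: "set_integrable lborel ({0<..<1} \<times> {0<..<1})
            (\<lambda>(x::real, y::real). - s * (of_real (x * y)) powr (a' - 1) * (of_real (- ln y)) powr (s - 1)
                 / ((1 - z' * of_real x * of_real y) * of_real (ln (x * y))))" for z' a'
  proof -
    have int': "set_integrable lborel DD (\<lambda>p. gg z' s a' (fst p * snd p, snd p))"
      using int unfolding feq DD_def .
    show ?thesis unfolding feq lerch_phi_def DD_def[symmetric]
      by (rule main_lerch[OF Gamma_defined sm int'])
  qed
  have P2: "riemann_zeta s * Gamma s =
             (LINT p : {0<..<1} \<times> {0<..<1} | lborel.
               (\<lambda>(x::real, y::real). - s * (of_real (- ln y)) powr (s - 1)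
                 / ((1 - of_real (x * y)) * of_real (ln (x * y)))) p)"
    if sm: "summable (\<lambda>k. 1 / (of_nat (Suc k)) powr s)"
      and int: "set_integrable lborel ({0<..<1} \<times> {0<..<1})
            (\<lambda>(x::real, y::real). - s * (of_real (- ln y)) powr (s - 1)
                 / ((1 - of_real (x * y)) * of_real (ln (x * y))))"
  proof -
    have pe: "(\<lambda>(x::real, y::real). - s * (of_real (x * y)) powr (1 - 1) * (of_real (- ln y)) powr (s - 1)
                 / ((1 - 1 * of_real x * of_real y) * of_real (ln (x * y)))) p
            = (\<lambda>(x::real, y::real). - s * (of_real (- ln y)) powr (s - 1)
                 / ((1 - of_real (x * y)) * of_real (ln (x * y)))) p"
      if "p \<in> {0<..<1} \<times> {0<..<1}" for p
      using that by (auto simp: mult.assoc)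
    have ser: "(\<lambda>k. 1 ^ k / (of_nat k + 1) powr s) = (\<lambda>k. 1 / (of_nat (Suc k) :: complex) powr s)"
      by (simp add: add.commute)
    have sm': "summable (\<lambda>k. (1::complex) ^ k / (of_nat k + 1) powr s)" using sm unfolding ser .
    have int': "set_integrable lborel ({0<..<1} \<times> {0<..<1})
            (\<lambda>(x::real, y::real). - s * (of_real (x * y)) powr (1 - 1) * (of_real (- ln y)) powr (s - 1)
                 / ((1 - 1 * of_real x * of_real y) * of_real (ln (x * y))))"
      using int by (rule set_integrable_cong[THEN iffD2, rotated -1]) (use pe in auto)
    have "riemann_zeta s = lerch_phi 1 s 1"
      unfolding riemann_zeta_def lerch_phi_def ser ..
    also note P1[OF sm' int']
    also have "(LINT p : {0<..<1} \<times> {0<..<1} | lborel.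
               (\<lambda>(x::real, y::real). - s * (of_real (x * y)) powr (1 - 1) * (of_real (- ln y)) powr (s - 1)
                 / ((1 - 1 * of_real x * of_real y) * of_real (ln (x * y)))) p)
             = (LINT p : {0<..<1} \<times> {0<..<1} | lborel.
               (\<lambda>(x::real, y::real). - s * (of_real (- ln y)) powr (s - 1)
                 / ((1 - of_real (x * y)) * of_real (ln (x * y)))) p)"
      by (rule set_lebesgue_integral_cong) (use pe DD_sets in \<open>auto simp: DD_def\<close>)
    finally show ?thesis .
  qed
  show ?thesis
  proof (intro conjI impI)
    assume h: "summable (\<lambda>k. z ^ k / (of_nat k + a) powr s) \<and>
          set_integrable lborel ({0<..<1} \<times> {0<..<1})
            (\<lambda>(x::real, y::real). - s * (of_real (x * y)) powr (a - 1) * (of_real (- ln y)) powr (s - 1)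
                 / ((1 - z * of_real x * of_real y) * of_real (ln (x * y))))"
    show "lerch_phi z s a * Gamma s =
             (LINT p : {0<..<1} \<times> {0<..<1} | lborel.
               (\<lambda>(x::real, y::real). - s * (of_real (x * y)) powr (a - 1) * (of_real (- ln y)) powr (s - 1)
                 / ((1 - z * of_real x * of_real y) * of_real (ln (x * y)))) p)"
      using h by (intro P1) auto
  next
    assume h: "summable (\<lambda>k. 1 / (of_nat (Suc k)) powr s) \<and>
          set_integrable lborel ({0<..<1} \<times> {0<..<1})
            (\<lambda>(x::real, y::real). - s * (of_real (- ln y)) powr (s - 1)
                 / ((1 - of_real (x * y)) * of_real (ln (x * y))))"
    show "riemann_zeta s * Gamma s =
             (LINT p : {0<..<1} \<times> {0<..<1} | lborel.
               (\<lambda>(x::real, y::real). - s * (of_real (- ln y)) powr (s - 1)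
                 / ((1 - of_real (x * y)) * of_real (ln (x * y)))) p)"
      using h by (intro P2) auto
  qed
qed

end
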